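(* Let $k\ge 2$ and let $T$ be a tree of order $n$ with $\gamma_k(T)=2$. Then \[ \Pi_1(T)\ge 4^{2k-1}(n-2k)^2 \quad\text{and}\quad \Pi_2(T)\le 4^{2k-1}(n-2k)^{n-2k}. \] Either equality holds if and only if $T\cong T^a_{n,k,2}$ for some $a\in\{1,\dots,k\}$.
   Context: For a graph $G$ with vertex degrees $d_G(u)$: $\Pi_1(G)=\prod_{u\in V(G)}d_G(u)^2$ and $\Pi_2(G)=\prod_{uv\in E(G)}d_G(u)d_G(v)=\prod_{u\in V(G)}d_G(u)^{d_G(u)}$. A set $D\subseteq V(G)$ is a distance $k$-dominating set if every vertex not in $D$ is at distance at most $k$ from some vertex of $D$; $\gamma_k(G)$ is the minimum size of such a set. For $n\ge 2k+2$ and $a\in\{1,\dots,k\}$, $T^a_{n,k,2}$ is the tree obtained from the path $v_0v_1\cdots v_{2k+1}$ on $2k+2$ vertices by attaching $n-2(k+1)$ new pendent vertices to $v_a$. *)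

theory Defs
  imports Main
begin

definition simple_graph :: "'a set \<Rightarrow> ('a \<Rightarrow> 'a \<Rightarrow> bool) \<Rightarrow> bool" where
  "simple_graph V E \<longleftrightarrow> finite V \<and> (\<forall>u v. E u v \<longrightarrow> u \<in> V \<and> v \<in> V \<and> u \<noteq> v \<and> E v u)"

definition deg :: "'a set \<Rightarrow> ('a \<Rightarrow> 'a \<Rightarrow> bool) \<Rightarrow> 'a \<Rightarrow> nat" where
  "deg V E u = card {v \<in> V. E u v}"

definition edges :: "('a \<Rightarrow> 'a \<Rightarrow> bool) \<Rightarrow> 'a set set" where
  "edges E = {{u, v} | u v. E u v}"

definition connected :: "'a set \<Rightarrow> ('a \<Rightarrow> 'a \<Rightarrow> bool) \<Rightarrow> bool" where
  "connected V E \<longleftrightarrow> (\<forall>u\<in>V. \<forall>v\<in>V. E\<^sup>*\<^sup>* u v)"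

definition is_tree :: "'a set \<Rightarrow> ('a \<Rightarrow> 'a \<Rightarrow> bool) \<Rightarrow> bool" where
  "is_tree V E \<longleftrightarrow> simple_graph V E \<and> V \<noteq> {} \<and> connected V E \<and> card (edges E) = card V - 1"

definition dist_le :: "('a \<Rightarrow> 'a \<Rightarrow> bool) \<Rightarrow> nat \<Rightarrow> 'a \<Rightarrow> 'a \<Rightarrow> bool" where
  "dist_le E k u v \<longleftrightarrow> (\<exists>j\<le>k. (E ^^ j) u v)"

definition dist_k_dominating :: "'a set \<Rightarrow> ('a \<Rightarrow> 'a \<Rightarrow> bool) \<Rightarrow> nat \<Rightarrow> 'a set \<Rightarrow> bool" where
  "dist_k_dominating V E k D \<longleftrightarrow> D \<subseteq> V \<and> (\<forall>v \<in> V - D. \<exists>u\<in>D. dist_le E k u v)"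

definition gamma_k :: "'a set \<Rightarrow> ('a \<Rightarrow> 'a \<Rightarrow> bool) \<Rightarrow> nat \<Rightarrow> nat" where
  "gamma_k V E k = (LEAST m. \<exists>D. dist_k_dominating V E k D \<and> card D = m)"

definition Pi1 :: "'a set \<Rightarrow> ('a \<Rightarrow> 'a \<Rightarrow> bool) \<Rightarrow> nat" where
  "Pi1 V E = (\<Prod>u\<in>V. deg V E u ^ 2)"

definition Pi2 :: "'a set \<Rightarrow> ('a \<Rightarrow> 'a \<Rightarrow> bool) \<Rightarrow> nat" where
  "Pi2 V E = (\<Prod>u\<in>V. deg V E u ^ deg V E u)"

definition graph_iso :: "'a set \<Rightarrow> ('a \<Rightarrow> 'a \<Rightarrow> bool) \<Rightarrow> 'b set \<Rightarrow> ('b \<Rightarrow> 'b \<Rightarrow> bool) \<Rightarrow> bool" where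
  "graph_iso V E V' E' \<longleftrightarrow> (\<exists>f. bij_betw f V V' \<and> (\<forall>u\<in>V. \<forall>v\<in>V. E u v \<longleftrightarrow> E' (f u) (f v)))"

text \<open>The tree T^a_{n,k,2} on vertex set {0..<n}: path 0,1,...,2k+1 (vertex i is v_i),
  and the vertices 2k+2,...,n-1 are pendent vertices attached to a.\<close>
definition T_edge :: "nat \<Rightarrow> nat \<Rightarrow> nat \<Rightarrow> nat \<Rightarrow> nat \<Rightarrow> bool" where
  "T_edge n k a u v \<longleftrightarrow> u < n \<and> v < n \<and>
     ((u \<le> 2*k+1 \<and> v \<le> 2*k+1 \<and> (u = v + 1 \<or> v = u + 1))
      \<or> (u = a \<and> v \<ge> 2*k+2) \<or> (v = a \<and> u \<ge> 2*k+2))"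

end

theory Submission
  imports Defs
begin



definition mytree :: "'a set \<Rightarrow> ('a \<Rightarrow> 'a \<Rightarrow> bool) \<Rightarrow> bool" where
  "mytree V E \<longleftrightarrow> simple_graph V E \<and> V \<noteq> {} \<and> connected V E \<and>
     (\<Sum>v\<in>V. deg V E v) = 2 * (card V - 1)"

lemma deg_edges:
  assumes sg: "simple_graph V E" and v: "v \<in> V"
  shows "deg V E v = card {e\<in>edges E. v \<in> e}"
proof -
  have "bij_betw (\<lambda>w. {v,w}) {w\<in>V. E v w} {e\<in>edges E. v \<in> e}"
  proof (rule bij_betwI')
    fix x y assume "x \<in> {w\<in>V. E v w}" "y \<in> {w\<in>V. E v w}"
    then show "({v, x} = {v, y}) = (x = y)" by (auto simp: doubleton_eq_iff)
  next
    fix x assume "x \<in> {w\<in>V. E v w}"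
    then show "{v, x} \<in> {e \<in> edges E. v \<in> e}" by (auto simp: edges_def)
  next
    fix e assume "e \<in> {e \<in> edges E. v \<in> e}"
    then obtain u u' where e: "e = {u,u'}" "E u u'" "v \<in> e" by (auto simp: edges_def)
    show "\<exists>x\<in>{w \<in> V. E v w}. e = {v, x}"
    proof (cases "v = u")
      case True then show ?thesis using e sg unfolding simple_graph_def by auto
    next
      case False then have "v = u'" using e by auto
      then show ?thesis using e sg unfolding simple_graph_def by auto
    qed
  qed
  then show ?thesis unfolding deg_def by (rule bij_betw_same_card)
qed

lemma edges_sub: assumes "simple_graph V E" shows "edges E \<subseteq> Pow V"
  using assms unfolding simple_graph_def edges_def by auto

lemma handshake:
  assumes sg: "simple_graph V E"
  shows "(\<Sum>v\<in>V. deg V E v) = 2 * card (edges E)"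
proof -
  have fV: "finite V" using sg simple_graph_def by auto
  have fE: "finite (edges E)" using edges_sub[OF sg] fV
    by (meson finite_Pow_iff finite_subset)
  have "(\<Sum>v\<in>V. deg V E v) = (\<Sum>v\<in>V. card {e\<in>edges E. v \<in> e})"
    using deg_edges[OF sg] by simp
  also have "\<dots> = 2 * card (edges E)"
  proof (rule sum_multicount[OF fV fE], rule ballI)
    fix e assume "e \<in> edges E"
    then obtain u u' where e: "e = {u,u'}" "E u u'" by (auto simp: edges_def)
    then have "u \<in> V" "u' \<in> V" "u \<noteq> u'" using sg unfolding simple_graph_def by auto
    then have "{i\<in>V. i \<in> e} = {u,u'}" using e by auto
    then show "card {i\<in>V. i \<in> e} = 2" using \<open>u \<noteq> u'\<close> by simp
  qed
  finally show ?thesis .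
qed

lemma is_tree_mytree: "is_tree V E \<Longrightarrow> mytree V E"
  unfolding is_tree_def mytree_def using handshake by metis




definition core :: "'a set \<Rightarrow> ('a \<Rightarrow> 'a \<Rightarrow> bool) \<Rightarrow> 'a set" where
  "core V E = {v\<in>V. 2 \<le> deg V E v}"
definition coreE :: "'a set \<Rightarrow> ('a \<Rightarrow> 'a \<Rightarrow> bool) \<Rightarrow> 'a \<Rightarrow> 'a \<Rightarrow> bool" where
  "coreE V E = (\<lambda>u v. E u v \<and> u \<in> core V E \<and> v \<in> core V E)"
definition lvs :: "'a set \<Rightarrow> ('a \<Rightarrow> 'a \<Rightarrow> bool) \<Rightarrow> 'a set" where
  "lvs V E = {v\<in>V. deg V E v = 1}"

lemma sg_finite: "simple_graph V E \<Longrightarrow> finite V"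
  by (simp add: simple_graph_def)
lemma sg_E: "simple_graph V E \<Longrightarrow> E u v \<Longrightarrow> u \<in> V \<and> v \<in> V \<and> u \<noteq> v \<and> E v u"
  by (simp add: simple_graph_def)

lemma deg_ge1_iff: "simple_graph V E \<Longrightarrow> 1 \<le> deg V E v \<longleftrightarrow> (\<exists>w. E v w)"
proof -
  assume sg: "simple_graph V E"
  have f: "finite {w\<in>V. E v w}" using sg_finite[OF sg] by simp
  have "1 \<le> card {w\<in>V. E v w} \<longleftrightarrow> {w\<in>V. E v w} \<noteq> {}"
    using f by (simp add: Suc_le_eq card_gt_0_iff)
  also have "\<dots> \<longleftrightarrow> (\<exists>w. E v w)" using sg_E[OF sg] by auto
  finally show ?thesis unfolding deg_def .
qed

lemma leaf_nbr:
  assumes "deg V E x = 1"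
  obtains w where "{u\<in>V. E x u} = {w}"
  using assms unfolding deg_def by (meson card_1_singletonE)

lemma leaf_nbr': "x \<in> lvs V E \<Longrightarrow> \<exists>w. {u\<in>V. E x u} = {w}"
  unfolding lvs_def deg_def by (auto simp: card_1_singleton_iff)

lemma deg_ge_card:
  assumes sg: "simple_graph V E" and "S \<subseteq> {w. E v w}"
  shows "card S \<le> deg V E v"
  unfolding deg_def using assms sg_E[OF sg] sg_finite[OF sg]
  by (intro card_mono) auto

lemma tree_deg_pos:
  assumes t: "mytree V E" and c: "2 \<le> card V" and v: "v \<in> V"
  shows "1 \<le> deg V E v"
proof -
  have sg: "simple_graph V E" using t mytree_def by auto
  obtain w where w: "w \<in> V" "w \<noteq> v"
  proof -
    have "\<not> V \<subseteq> {v}"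
    proof
      assume "V \<subseteq> {v}"
      then have "card V \<le> card {v}" by (intro card_mono) auto
      then show False using c by simp
    qed
    then show ?thesis using that by auto
  qed
  have "E\<^sup>*\<^sup>* v w" using t v w unfolding mytree_def connected_def by auto
  then obtain y where "E v y" using w(2) by (metis converse_rtranclpE)
  then show ?thesis using deg_ge1_iff[OF sg] by auto
qed

lemma card_lvs:
  assumes t: "mytree V E" and c: "2 \<le> card V"
  shows "2 \<le> card (lvs V E)" and "lvs V E \<union> core V E = V" and "lvs V E \<inter> core V E = {}"
    and "card V = card (lvs V E) + card (core V E)"
    and "(\<Sum>v\<in>V. deg V E v) = card (lvs V E) + (\<Sum>v\<in>core V E. deg V E v)"
proof -
  have sg: "simple_graph V E" using t mytree_def by auto
  have fV: "finite V" using sg_finite[OF sg] .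
  show U: "lvs V E \<union> core V E = V" using tree_deg_pos[OF t c]
    unfolding lvs_def core_def by force
  show D: "lvs V E \<inter> core V E = {}" unfolding lvs_def core_def by auto
  have fl: "finite (lvs V E)" "finite (core V E)" using fV unfolding lvs_def core_def by auto
  show cV: "card V = card (lvs V E) + card (core V E)"
    using card_Un_disjoint[OF fl D] U by simp
  have "(\<Sum>v\<in>V. deg V E v) = (\<Sum>v\<in>lvs V E. deg V E v) + (\<Sum>v\<in>core V E. deg V E v)"
    using sum.union_disjoint[OF fl D] U by simp
  also have "(\<Sum>v\<in>lvs V E. deg V E v) = card (lvs V E)" unfolding lvs_def by simp
  finally show S: "(\<Sum>v\<in>V. deg V E v) = card (lvs V E) + (\<Sum>v\<in>core V E. deg V E v)" .
  have "(\<Sum>v\<in>core V E. deg V E v) \<ge> (\<Sum>v\<in>core V E. 2)"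
    by (rule sum_mono) (auto simp: core_def)
  then have "(\<Sum>v\<in>core V E. deg V E v) \<ge> 2 * card (core V E)" by simp
  moreover have "(\<Sum>v\<in>V. deg V E v) = 2 * (card V - 1)" using t mytree_def by auto
  ultimately show "2 \<le> card (lvs V E)" using S cV c by linarith
qed

lemma leaf_leaf:
  assumes t: "mytree V E" and x: "x \<in> lvs V E" and y: "y \<in> lvs V E" and e: "E x y"
  shows "V = {x, y}"
proof -
  have sg: "simple_graph V E" using t mytree_def by auto
  have cl: "\<And>z z'. z \<in> {x,y} \<Longrightarrow> E z z' \<Longrightarrow> z' \<in> {x,y}"
  proof -
    fix z z' assume z: "z \<in> {x,y}" and ez: "E z z'"
    show "z' \<in> {x,y}"
    proof (cases "z = x")
      case True
      obtain w where w: "{u\<in>V. E x u} = {w}" using leaf_nbr'[OF x] by blast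
      have "y \<in> {u\<in>V. E x u}" "z' \<in> {u\<in>V. E x u}" using e ez True sg_E[OF sg, of x y] sg_E[OF sg, of x z'] by auto
      then show ?thesis using w by auto
    next
      case False
      then have zy: "z = y" using z by auto
      obtain w where w: "{u\<in>V. E y u} = {w}" using leaf_nbr'[OF y] by blast
      have "x \<in> {u\<in>V. E y u}" "z' \<in> {u\<in>V. E y u}" using e ez zy sg_E[OF sg, of x y] sg_E[OF sg, of y z'] by auto
      then show ?thesis using w by auto
    qed
  qed
  have "\<And>z. E\<^sup>*\<^sup>* x z \<Longrightarrow> z \<in> {x,y}"
  proof -
    fix z assume "E\<^sup>*\<^sup>* x z"
    then show "z \<in> {x,y}"
    proof (induction rule: rtranclp_induct)
      case base then show ?case by simp
    next
      case (step a b) then show ?case using cl[of a b] by blast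
    qed
  qed
  moreover have "x \<in> V" using x by (auto simp: lvs_def)
  moreover have "\<forall>u\<in>V. \<forall>v\<in>V. E\<^sup>*\<^sup>* u v" using t unfolding mytree_def connected_def by blast
  ultimately have "V \<subseteq> {x,y}" by blast
  moreover have "{x,y} \<subseteq> V" using x y by (auto simp: lvs_def)
  ultimately show ?thesis by auto
qed

lemma leaf_core_nbr:
  assumes t: "mytree V E" and c: "3 \<le> card V" and x: "x \<in> lvs V E"
  obtains w where "{u\<in>V. E x u} = {w}" "w \<in> core V E"
proof -
  have sg: "simple_graph V E" using t mytree_def by auto
  obtain w where w: "{u\<in>V. E x u} = {w}" using leaf_nbr'[OF x] by blast
  have ew: "E x w" "w \<in> V" using w by auto
  have "w \<notin> lvs V E"
  proof
    assume "w \<in> lvs V E"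
    then have "V = {x,w}" using leaf_leaf[OF t x _ ew(1)] by auto
    then have "card V \<le> 2" by (cases "x = w") auto
    then show False using c by simp
  qed
  then have "w \<in> core V E" using card_lvs(2)[OF t] c ew(2) by auto
  then show ?thesis using that w by blast
qed




definition domc :: "'a set \<Rightarrow> ('a \<Rightarrow> 'a \<Rightarrow> bool) \<Rightarrow> nat \<Rightarrow> 'a \<Rightarrow> bool" where
  "domc V E j c \<longleftrightarrow> c \<in> V \<and> (\<forall>v\<in>V. dist_le E j c v)"

lemma mytree_sg: "mytree V E \<Longrightarrow> simple_graph V E" by (simp add: mytree_def)

lemma deg_split:
  assumes t: "mytree V E" and c: "2 \<le> card V"
  shows "deg V E v = card {w\<in>core V E. E v w} + card {w\<in>lvs V E. E v w}"
proof -
  have sg: "simple_graph V E" using t mytree_sg by auto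
  have fV: "finite V" using sg_finite[OF sg] .
  have U: "lvs V E \<union> core V E = V" and D: "lvs V E \<inter> core V E = {}" using card_lvs[OF t c] by auto
  have "{w\<in>V. E v w} = {w\<in>core V E. E v w} \<union> {w\<in>lvs V E. E v w}" using U by auto
  moreover have "finite {w\<in>core V E. E v w}" "finite {w\<in>lvs V E. E v w}"
    using fV unfolding core_def lvs_def by auto
  moreover have "{w\<in>core V E. E v w} \<inter> {w\<in>lvs V E. E v w} = {}" using D by auto
  ultimately show ?thesis unfolding deg_def by (simp add: card_Un_disjoint)
qed

lemma core_deg: "v \<in> core V E \<Longrightarrow> deg (core V E) (coreE V E) v = card {w\<in>core V E. E v w}"
  unfolding deg_def coreE_def by (rule arg_cong[where f=card]) auto

lemma core_tree:
  assumes t: "mytree V E" and c: "3 \<le> card V"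
  shows "mytree (core V E) (coreE V E)"
proof -
  define C where "C = core V E"
  define L where "L = lvs V E"
  have sg: "simple_graph V E" using t mytree_sg by auto
  have fV: "finite V" using sg_finite[OF sg] .
  have c2: "2 \<le> card V" using c by simp
  have U: "L \<union> C = V" and D: "L \<inter> C = {}" and cV: "card V = card L + card C"
    and SV: "(\<Sum>v\<in>V. deg V E v) = card L + (\<Sum>v\<in>C. deg V E v)" and L2: "2 \<le> card L"
    using card_lvs[OF t c2] unfolding C_def L_def by auto
  have fC: "finite C" "finite L" using fV U by auto
  have sgC: "simple_graph C (coreE V E)"
    using sg fC unfolding simple_graph_def coreE_def C_def by auto
  have tsum: "(\<Sum>v\<in>V. deg V E v) = 2 * (card V - 1)" using t mytree_def by auto
  have Cne: "C \<noteq> {}"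
  proof
    assume "C = {}"
    then have "card V = card L" "(\<Sum>v\<in>V. deg V E v) = card L" using cV SV by auto
    then show False using tsum c by simp
  qed
  have conn: "connected C (coreE V E)"
    unfolding connected_def
  proof (intro ballI)
    fix u v assume u: "u \<in> C" and v: "v \<in> C"
    have "E\<^sup>*\<^sup>* u v" using t u v U unfolding mytree_def connected_def by auto
    then obtain j where "(E ^^ j) u v" using rtranclp_imp_relpowp by metis
    then show "(coreE V E)\<^sup>*\<^sup>* u v" using u v
    proof (induction j arbitrary: u rule: less_induct)
      case (less j)
      show ?case
      proof (cases j)
        case 0 then show ?thesis using less by simp
      next
        case (Suc j')
        then obtain x where ux: "E u x" and xv: "(E ^^ j') x v" using less.prems relpowp_Suc_D2 by metis
        have xV: "x \<in> V" using sg_E[OF sg ux] by auto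
        show ?thesis
        proof (cases "x \<in> C")
          case True
          have "(coreE V E)\<^sup>*\<^sup>* x v" using less.IH[of j' x] Suc xv True less.prems by auto
          moreover have "coreE V E u x" using ux True less.prems unfolding coreE_def C_def by auto
          ultimately show ?thesis by (meson converse_rtranclp_into_rtranclp)
        next
          case False
          then have xL: "x \<in> L" using xV U by auto
          have "x \<noteq> v" using False less.prems by auto
          then obtain j'' where j'': "j' = Suc j''" using xv by (cases j') auto
          then obtain y where xy: "E x y" and yv: "(E ^^ j'') y v" using xv relpowp_Suc_D2 by metis
          obtain w where w: "{z\<in>V. E x z} = {w}" using leaf_nbr'[of x V E] xL L_def by auto
          have "u \<in> {z\<in>V. E x z}" "y \<in> {z\<in>V. E x z}" using ux xy sg_E[OF sg ux] sg_E[OF sg xy] by auto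
          then have "y = u" using w by auto
          then show ?thesis using less.IH[of j'' u] yv j'' Suc less.prems by auto
        qed
      qed
    qed
  qed
  have sumC: "(\<Sum>v\<in>C. deg C (coreE V E) v) = 2 * (card C - 1)"
  proof -
    have e1: "\<forall>v\<in>C. deg V E v = deg C (coreE V E) v + card {w\<in>L. E v w}"
      using deg_split[OF t c2] core_deg unfolding C_def L_def by metis
    have "(\<Sum>v\<in>C. card {w\<in>L. E v w}) = 1 * card L"
    proof (rule sum_multicount[OF fC(1) fC(2)], rule ballI)
      fix w assume wL: "w \<in> L"
      obtain z where z: "{u\<in>V. E w u} = {z}" "z \<in> core V E"
        using leaf_core_nbr[OF t c] wL L_def by metis
      have "{i\<in>C. E i w} = {z}" using z sg_E[OF sg, of _ w] sg_E[OF sg, of w] U unfolding C_def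
        by auto
      then show "card {i\<in>C. E i w} = 1" by simp
    qed
    then have "(\<Sum>v\<in>C. deg V E v) = (\<Sum>v\<in>C. deg C (coreE V E) v) + card L"
      using e1 by (simp add: sum.distrib)
    then show ?thesis using SV tsum cV Cne fC by (simp add: card_gt_0_iff)
  qed
  show ?thesis unfolding mytree_def using sgC Cne conn sumC C_def by auto
qed

lemma dist_le_mono: "dist_le R j u v \<Longrightarrow> (\<And>x y. R x y \<Longrightarrow> S x y) \<Longrightarrow> dist_le S j u v"
  unfolding dist_le_def using relpowp_mono by metis

lemma dom_lift:
  assumes t: "mytree V E" and c: "3 \<le> card V" and d: "domc (core V E) (coreE V E) j c"
  shows "domc V E (Suc j) c"
proof -
  have sg: "simple_graph V E" using t mytree_sg by auto
  have U: "lvs V E \<union> core V E = V" using card_lvs[OF t] c by auto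
  have cC: "c \<in> core V E" using d by (simp add: domc_def)
  have "dist_le E (Suc j) c v" if v: "v \<in> V" for v
  proof (cases "v \<in> core V E")
    case True
    then have "dist_le (coreE V E) j c v" using d by (simp add: domc_def)
    then have "dist_le E j c v" by (rule dist_le_mono) (simp add: coreE_def)
    then show ?thesis unfolding dist_le_def by (meson le_SucI)
  next
    case False
    then have vL: "v \<in> lvs V E" using U v by auto
    obtain w where w: "{u\<in>V. E v u} = {w}" "w \<in> core V E" using leaf_core_nbr[OF t c vL] by metis
    have "dist_le (coreE V E) j c w" using d w by (simp add: domc_def)
    then have "dist_le E j c w" by (rule dist_le_mono) (simp add: coreE_def)
    then obtain i where i: "i \<le> j" "(E ^^ i) c w" unfolding dist_le_def by auto
    have "E w v" using w sg_E[OF sg, of v w] by auto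
    then have "(E ^^ Suc i) c v" using i relpowp_Suc_I by metis
    moreover have "Suc i \<le> Suc j" using i by simp
    ultimately show ?thesis unfolding dist_le_def by blast
  qed
  then show ?thesis using cC U by (auto simp: domc_def)
qed

lemma dom_mono: "domc V E j c \<Longrightarrow> j \<le> j' \<Longrightarrow> domc V E j' c"
  unfolding domc_def dist_le_def by (meson order.trans)

lemma small_dom:
  assumes t: "mytree V E" and c: "card V \<le> 2" and cV: "c \<in> V"
  shows "domc V E 1 c"
proof -
  have sg: "simple_graph V E" using t mytree_sg by auto
  have "dist_le E 1 c v" if v: "v \<in> V" for v
  proof (cases "v = c")
    case True then show ?thesis unfolding dist_le_def by (intro exI[of _ 0]) auto
  next
    case False
    have "card {c, v} \<le> card V" using v cV sg_finite[OF sg] by (intro card_mono) auto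
    then have "card V = 2" using c False by simp
    then have c2: "2 \<le> card V" by simp
    then have "1 \<le> deg V E c" using tree_deg_pos[OF t c2 cV] by simp
    then obtain w where w: "E c w" using deg_ge1_iff[OF sg] by auto
    have "w \<in> V" "w \<noteq> c" using sg_E[OF sg w] by auto
    moreover have "V = {c, v}"
    proof -
      have "{c,v} \<subseteq> V" using v cV by auto
      moreover have "card {c,v} = card V" using False \<open>card V = 2\<close> by simp
      ultimately show ?thesis using sg_finite[OF sg] by (metis card_subset_eq)
    qed
    ultimately have "w = v" by auto
    then show ?thesis using w unfolding dist_le_def by (intro exI[of _ 1]) auto
  qed
  then show ?thesis using cV by (auto simp: domc_def)
qed

lemma count_lemma:
  "mytree V E \<Longrightarrow> (\<forall>c\<in>V. \<not> domc V E j c) \<Longrightarrow> 2*j + 2 \<le> card V"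
proof (induction j arbitrary: V E)
  case 0
  obtain c where c: "c \<in> V" using 0 by (auto simp: mytree_def)
  then obtain v where v: "v \<in> V" "\<not> dist_le E 0 c v" using 0 c by (auto simp: domc_def)
  then have "v \<noteq> c" unfolding dist_le_def by auto
  then have "card {c,v} \<le> card V" using c v 0 sg_finite[OF mytree_sg] by (intro card_mono) auto
  then show ?case using \<open>v \<noteq> c\<close> by simp
next
  case (Suc j)
  have nd: "\<forall>c\<in>V. \<not> domc V E j c" using Suc.prems dom_mono by (metis le_SucI order_refl)
  have c3: "3 \<le> card V"
  proof (rule ccontr)
    assume "\<not> 3 \<le> card V"
    then have "card V \<le> 2" by simp
    obtain c where c: "c \<in> V" using Suc.prems by (auto simp: mytree_def)
    have "domc V E 1 c" using small_dom[OF Suc.prems(1) \<open>card V \<le> 2\<close> c] .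
    then have "domc V E (Suc j) c" using dom_mono by fastforce
    then show False using Suc.prems c by auto
  qed
  have tC: "mytree (core V E) (coreE V E)" using core_tree[OF Suc.prems(1) c3] .
  have "\<forall>c\<in>core V E. \<not> domc (core V E) (coreE V E) j c"
    using dom_lift[OF Suc.prems(1) c3] Suc.prems(2) domc_def by metis
  then have "2*j+2 \<le> card (core V E)" using Suc.IH[OF tC] by auto
  moreover have "2 \<le> card (lvs V E)" "card V = card (lvs V E) + card (core V E)"
    using card_lvs[OF Suc.prems(1)] c3 by auto
  ultimately show ?case by simp
qed




lemma bern1: "c^(Suc s) + (Suc s)*a*c^s \<le> ((c::nat)+a)^(Suc s)"
proof (induction s)
  case 0 then show ?case by simp
next
  case (Suc s)
  have "(c+a)^(Suc (Suc s)) = (c+a) * (c+a)^(Suc s)" by simp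
  also have "\<dots> \<ge> (c+a) * (c^(Suc s) + (Suc s)*a*c^s)" using Suc by (intro mult_le_mono2)
  finally have h: "(c+a) * (c^(Suc s) + (Suc s)*a*c^s) \<le> (c+a)^(Suc (Suc s))" .
  have "c^(Suc (Suc s)) + (Suc (Suc s))*a*c^(Suc s) \<le> (c+a) * (c^(Suc s) + (Suc s)*a*c^s)"
    by (simp add: algebra_simps)
  then show ?case using h by linarith
qed

lemma bern2: "c^s * (2*c^2 + 2*(s+2)*a*c + (s+2)*(s+1)*a^2) \<le> 2*((c::nat)+a)^(s+2)"
proof (induction s)
  case 0 then show ?case by (simp add: power2_eq_square algebra_simps)
next
  case (Suc s)
  have "2*(c+a)^(Suc s+2) = (c+a) * (2*(c+a)^(s+2))" by simp
  also have "\<dots> \<ge> (c+a) * (c^s * (2*c^2 + 2*(s+2)*a*c + (s+2)*(s+1)*a^2))"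
    using Suc by (intro mult_le_mono2)
  finally have h: "(c+a) * (c^s * (2*c^2 + 2*(s+2)*a*c + (s+2)*(s+1)*a^2)) \<le> 2*(c+a)^(Suc s+2)" .
  have "c^(Suc s) * (2*c^2 + 2*(Suc s+2)*a*c + (Suc s+2)*(Suc s+1)*a^2)
     \<le> (c+a) * (c^s * (2*c^2 + 2*(s+2)*a*c + (s+2)*(s+1)*a^2))"
    by (simp add: power2_eq_square algebra_simps)
  then show ?case using h by linarith
qed

lemma bernB: assumes "2 \<le> t" shows "(2+a)^2 * t^t \<le> 4 * ((t::nat)+a)^t"
proof -
  obtain s where s: "t = s + 2" using assms by (metis add.commute le_Suc_ex)
  have b: "t^s * (2*t^2 + 2*(s+2)*a*t + (s+2)*(s+1)*a^2) \<le> 2*(t+a)^t"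
    using bern2[of t s a] s by simp
  have tt: "t^t = t^s * t^2" using s by (metis power_add)
  have "(2+a)^2 * t^t = t^s * ((2+a)^2 * t^2)" unfolding tt by (simp add: ac_simps)
  also have "\<dots> \<le> t^s * (2*(2*t^2 + 2*(s+2)*a*t + (s+2)*(s+1)*a^2))"
  proof (intro mult_le_mono2)
    have "(2+a)^2 * t^2 = 4*t^2 + 4*a*t*t + a^2*t*(s+2)" by (simp add: s power2_eq_square algebra_simps)
    also have "\<dots> \<le> 4*t^2 + 4*a*t*t + a^2*(2*(s+1))*(s+2)"
    proof -
      have m: "t \<le> 2*(s+1)" using s by simp
      have "a^2*t*(s+2) \<le> a^2*(2*(s+1))*(s+2)" by (intro mult_le_mono1 mult_le_mono2 m)
      then show ?thesis by (rule add_left_mono)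
    qed
    finally show "(2+a)^2 * t^2 \<le> 2*(2*t^2 + 2*(s+2)*a*t + (s+2)*(s+1)*a^2)"
      by (simp add: s algebra_simps)
  qed
  also have "\<dots> = 2 * (t^s * (2*t^2 + 2*(s+2)*a*t + (s+2)*(s+1)*a^2))" by simp
  also have "\<dots> \<le> 4 * (t+a)^t" using b by simp
  finally show ?thesis .
qed

lemma PW_core:
  fixes a t u :: nat assumes tu: "u = t + a" and t2: "2 \<le> t" and au: "2 + a \<le> u"
  shows "(2+a)^(2+a) * t^t \<le> 4 * u^u"
proof -
  have "(2+a)^(2+a) = (2+a)^2 * (2+a)^a" by (rule power_add)
  also have "\<dots> \<le> (2+a)^2 * u^a" using au by (intro mult_le_mono2 power_mono) auto
  finally have "(2+a)^(2+a) * t^t \<le> ((2+a)^2 * u^a) * t^t" by (rule mult_le_mono1)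
  also have "\<dots> = u^a * ((2+a)^2 * t^t)" by (simp only: mult_ac)
  finally have h1: "(2+a)^(2+a) * t^t \<le> u^a * ((2+a)^2 * t^t)" .
  have "(2+a)^2 * t^t \<le> 4 * (t+a)^t" using bernB[OF t2] .
  then have "u^a * ((2+a)^2 * t^t) \<le> u^a * (4 * u^t)" unfolding tu by (intro mult_le_mono2)
  also have "\<dots> = 4 * u^(a+t)" by (simp only: power_add mult_ac)
  also have "\<dots> = 4 * u^u" using tu by (simp add: add.commute)
  finally show ?thesis using h1 by linarith
qed

lemma PWs_core:
  fixes a t u :: nat assumes tu: "u = t + a" and t2: "2 \<le> t" and au: "2 + a < u" and a1: "1 \<le> a"
  shows "(2+a)^(2+a) * t^t < 4 * u^u"
proof -
  have pos: "0 < (2+a)^2 * t^t" using t2 by simp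
  have "(2+a)^a < u^a" using au a1 by (intro power_strict_mono) auto
  then have "(2+a)^a * ((2+a)^2 * t^t) < u^a * ((2+a)^2 * t^t)"
    using pos by (intro mult_strict_right_mono) auto
  moreover have "(2+a)^(2+a) * t^t = (2+a)^a * ((2+a)^2 * t^t)"
    unfolding power_add[of "2+a" 2 a] by (simp only: mult_ac)
  ultimately have h1: "(2+a)^(2+a) * t^t < u^a * ((2+a)^2 * t^t)" by (simp only:)
  have "(2+a)^2 * t^t \<le> 4 * (t+a)^t" using bernB[OF t2] .
  then have "u^a * ((2+a)^2 * t^t) \<le> u^a * (4 * u^t)" unfolding tu by (intro mult_le_mono2)
  also have "\<dots> = 4 * u^(a+t)" by (simp only: power_add mult_ac)
  also have "\<dots> = 4 * u^u" using tu by (simp add: add.commute)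
  finally show ?thesis using h1 by linarith
qed

lemma PW: "(2+a)^(2+a) * (2+b)^(2+b) \<le> 4*((2::nat)+a+b)^(2+a+b)"
  by (rule PW_core) auto

lemma PWs: assumes "1 \<le> a" "1 \<le> b"
  shows "(2+a)^(2+a) * (2+b)^(2+b) < 4*((2::nat)+a+b)^(2+a+b)"
  by (rule PWs_core) (use assms in auto)

lemma G1: "finite A \<Longrightarrow> 2^card A * (2 + (\<Sum>x\<in>A. g x)) \<le> 2 * (\<Prod>x\<in>A. (2::nat) + g x)"
proof (induction A rule: finite_induct)
  case empty then show ?case by simp
next
  case (insert x F)
  define S where "S = (\<Sum>x\<in>F. g x)"
  define P where "P = (\<Prod>x\<in>F. (2::nat) + g x)"
  have ih: "2^card F * (2 + S) \<le> 2 * P" using insert S_def P_def by simp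
  have "2^card (insert x F) * (2 + (\<Sum>x\<in>insert x F. g x)) = 2^card F * (2 * (2 + g x + S))"
    using insert S_def by simp
  also have "\<dots> \<le> 2^card F * ((2 + g x) * (2 + S))"
    by (intro mult_le_mono2) (simp add: algebra_simps)
  also have "\<dots> = (2 + g x) * (2^card F * (2 + S))" by (simp only: mult_ac)
  also have "\<dots> \<le> (2 + g x) * (2 * P)" using ih by (intro mult_le_mono2)
  also have "\<dots> = 2 * (\<Prod>x\<in>insert x F. 2 + g x)" using insert P_def by simp
  finally show ?case .
qed

lemma ineq3: assumes "1 \<le> a" "1 \<le> b" shows "4*(2+a+b+S) < (2+a)*(2+b)*(2+(S::nat))"
proof -
  have "1 \<le> a*b" using assms by simp
  then show ?thesis by (simp add: algebra_simps)
qed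

lemma G1s: assumes "finite A" "u \<in> A" "v \<in> A" "u \<noteq> v" "1 \<le> g u" "1 \<le> g v"
  shows "2^card A * (2 + (\<Sum>x\<in>A. g x)) < 2 * (\<Prod>x\<in>A. (2::nat) + g x)"
proof -
  define B where "B = A - {u,v}"
  have fB: "finite B" using assms B_def by simp
  have A: "A = insert u (insert v B)" "u \<notin> insert v B" "v \<notin> B" using assms B_def by auto
  define S where "S = (\<Sum>x\<in>B. g x)"
  define P where "P = (\<Prod>x\<in>B. (2::nat) + g x)"
  have ih: "2^card B * (2 + S) \<le> 2 * P" using G1[OF fB] S_def P_def by simp
  have "2^card A * (2 + (\<Sum>x\<in>A. g x)) = 2^card B * (4 * (2 + g u + g v + S))"
    using A fB S_def by (simp add: algebra_simps)
  also have "\<dots> < 2^card B * ((2 + g u) * (2 + g v) * (2 + S))"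
    using ineq3[OF assms(5,6), of S] by (intro mult_strict_left_mono) auto
  also have "\<dots> = (2 + g u) * (2 + g v) * (2^card B * (2 + S))" by (simp only: mult_ac)
  also have "\<dots> \<le> (2 + g u) * (2 + g v) * (2 * P)" using ih by (intro mult_le_mono2)
  also have "\<dots> = 2 * ((2 + g u) * ((2 + g v) * P))" by (simp only: mult_ac)
  also have "\<dots> = 2 * (\<Prod>x\<in>A. 2 + g x)"
    by (simp only: A(1) prod.insert[OF finite_insert[THEN iffD2, OF fB] A(2)] prod.insert[OF fB A(3)] P_def)
  finally show ?thesis .
qed

lemma G2: "finite A \<Longrightarrow> 4 * (\<Prod>x\<in>A. ((2::nat) + g x)^(2 + g x)) \<le> 4^card A * (2 + (\<Sum>x\<in>A. g x))^(2 + (\<Sum>x\<in>A. g x))"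
proof (induction A rule: finite_induct)
  case empty then show ?case by simp
next
  case (insert x F)
  define S where "S = (\<Sum>x\<in>F. g x)"
  define P where "P = (\<Prod>x\<in>F. ((2::nat) + g x)^(2 + g x))"
  have ih: "4 * P \<le> 4^card F * (2 + S)^(2 + S)" using insert S_def P_def by simp
  have "4 * (\<Prod>x\<in>insert x F. ((2::nat) + g x)^(2 + g x)) = (2 + g x)^(2 + g x) * (4 * P)"
    using insert P_def by simp
  also have "\<dots> \<le> (2 + g x)^(2 + g x) * (4^card F * (2 + S)^(2 + S))" using ih by (intro mult_le_mono2)
  also have "\<dots> = 4^card F * ((2 + g x)^(2 + g x) * (2 + S)^(2 + S))" by (simp add: ac_simps)
  also have "\<dots> \<le> 4^card F * (4 * (2 + g x + S)^(2 + g x + S))" using PW[of "g x" S] by (intro mult_le_mono2)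
  also have "\<dots> = 4^card (insert x F) * (2 + (\<Sum>x\<in>insert x F. g x))^(2 + (\<Sum>x\<in>insert x F. g x))"
    using insert S_def by (simp add: ac_simps)
  finally show ?case .
qed

lemma G2s: assumes "finite A" "u \<in> A" "v \<in> A" "u \<noteq> v" "1 \<le> g u" "1 \<le> g v"
  shows "4 * (\<Prod>x\<in>A. ((2::nat) + g x)^(2 + g x)) < 4^card A * (2 + (\<Sum>x\<in>A. g x))^(2 + (\<Sum>x\<in>A. g x))"
proof -
  define B where "B = A - {u,v}"
  have fB: "finite B" using assms B_def by simp
  have A: "A = insert u (insert v B)" "u \<notin> insert v B" "v \<notin> B" using assms B_def by auto
  define S where "S = (\<Sum>x\<in>B. g x)"
  define P where "P = (\<Prod>x\<in>B. ((2::nat) + g x)^(2 + g x))"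
  have ih: "4 * P \<le> 4^card B * (2 + S)^(2 + S)" using G2[OF fB] S_def P_def by simp
  have "4 * (\<Prod>x\<in>A. ((2::nat) + g x)^(2 + g x)) = ((2 + g u)^(2 + g u) * (2 + g v)^(2 + g v)) * (4 * P)"
    using A fB P_def by (simp add: ac_simps)
  also have "\<dots> \<le> ((2 + g u)^(2 + g u) * (2 + g v)^(2 + g v)) * (4^card B * (2 + S)^(2 + S))"
    using ih by (intro mult_le_mono2)
  also have "\<dots> < (4 * (2 + g u + g v)^(2 + g u + g v)) * (4^card B * (2 + S)^(2 + S))"
    using PWs[OF assms(5,6)] by (intro mult_strict_right_mono) auto
  also have "\<dots> = 4^Suc (card B) * ((2 + (g u + g v))^(2 + (g u + g v)) * (2 + S)^(2 + S))"
    by (simp add: ac_simps)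
  also have "\<dots> \<le> 4^Suc (card B) * (4 * (2 + (g u + g v) + S)^(2 + (g u + g v) + S))"
    using PW[of "g u + g v" S] by (intro mult_le_mono2)
  also have "\<dots> = 4^card A * (2 + (\<Sum>x\<in>A. g x))^(2 + (\<Sum>x\<in>A. g x))"
    using A fB S_def by (simp add: ac_simps)
  finally show ?thesis .
qed

lemma M1: "m0 + d + 2 \<le> n \<Longrightarrow> 2^m0 * (n - m0) \<le> 2^(m0+d) * (n - (m0+d)) \<and>
    (0 < d \<longrightarrow> 2^m0 * (n - m0) < 2^(m0+d) * (n - (m0+d)))"
proof (induction d)
  case 0 then show ?case by simp
next
  case (Suc d)
  then have ih: "2^m0 * (n - m0) \<le> 2^(m0+d) * (n - (m0+d))" by simp
  have "n - (m0+d) < 2 * (n - (m0 + Suc d))" using Suc.prems by simp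
  then have "2^(m0+d) * (n - (m0+d)) < 2^(m0+d) * (2 * (n - (m0 + Suc d)))" by simp
  also have "\<dots> = 2^(m0 + Suc d) * (n - (m0 + Suc d))" by simp
  finally have X: "2^(m0+d) * (n - (m0+d)) < 2^(m0 + Suc d) * (n - (m0 + Suc d))" .
  have "2^m0 * (n - m0) < 2^(m0 + Suc d) * (n - (m0 + Suc d))" by (rule le_less_trans[OF ih X])
  then show ?case by (simp only: less_imp_le simp_thms)
qed

lemma step4: assumes "2 \<le> c" shows "4 * c^c < ((c::nat)+1)^(c+1)"
proof -
  obtain s where s: "c = Suc s" using assms by (cases c) auto
  have "c^(Suc s) + (Suc s)*1*c^s \<le> (c+1)^(Suc s)" by (rule bern1)
  then have b: "2 * c^c \<le> (c+1)^c" using s by simp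
  have "4 * c^c < 3 * (2 * c^c)" using assms by simp
  also have "\<dots> \<le> (c+1) * (2 * c^c)" using assms by (intro mult_le_mono1) simp
  also have "\<dots> \<le> (c+1) * (c+1)^c" using b by (intro mult_le_mono2)
  finally show ?thesis by simp
qed

lemma M2: "m0 + d + 2 \<le> n \<Longrightarrow> 4^(m0+d) * (n - (m0+d))^(n - (m0+d)) \<le> 4^m0 * (n - m0)^(n - m0) \<and>
    (0 < d \<longrightarrow> 4^(m0+d) * (n - (m0+d))^(n - (m0+d)) < 4^m0 * (n - m0)^(n - m0))"
proof (induction d)
  case 0 then show ?case by simp
next
  case (Suc d)
  then have ih: "4^(m0+d) * (n - (m0+d))^(n - (m0+d)) \<le> 4^m0 * (n - m0)^(n - m0)" by simp
  define c where "c = n - (m0 + Suc d)"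
  have c2: "2 \<le> c" and c1: "n - (m0+d) = c + 1" using Suc.prems c_def by auto
  have "4^(m0 + Suc d) * c^c = 4^(m0+d) * (4 * c^c)" by simp
  also have "\<dots> < 4^(m0+d) * ((c+1)^(c+1))" using step4[OF c2] by simp
  finally have X: "4^(m0 + Suc d) * c^c < 4^(m0+d) * (n - (m0+d))^(n - (m0+d))" using c1 by simp
  have "4^(m0 + Suc d) * c^c < 4^m0 * (n - m0)^(n - m0)" by (rule less_le_trans[OF X ih])
  then show ?case unfolding c_def by (simp only: less_imp_le simp_thms)
qed




lemma iso_inv:
  assumes b: "bij_betw \<phi> W V" and adj: "\<forall>i\<in>W. \<forall>i'\<in>W. E (\<phi> i) (\<phi> i') \<longleftrightarrow> F i i'"
  shows "graph_iso V E W F"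
proof -
  define f where "f = inv_into W \<phi>"
  have bf: "bij_betw f V W" using bij_betw_inv_into[OF b] f_def by simp
  have fi: "\<And>u. u \<in> V \<Longrightarrow> \<phi> (f u) = u" using b f_def by (simp add: bij_betw_inv_into_right)
  have "\<forall>u\<in>V. \<forall>v\<in>V. E u v \<longleftrightarrow> F (f u) (f v)"
  proof (intro ballI)
    fix u v assume u: "u \<in> V" and v: "v \<in> V"
    have "f u \<in> W" "f v \<in> W" using bf u v bij_betwE by blast+
    then show "E u v \<longleftrightarrow> F (f u) (f v)" using adj fi[OF u] fi[OF v] by metis
  qed
  then show ?thesis unfolding graph_iso_def using bf by blast
qed

lemma card3: "a \<noteq> b \<Longrightarrow> a \<noteq> c \<Longrightarrow> b \<noteq> c \<Longrightarrow> card {a,b,c} = 3" by simp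

lemma two_elems:
  assumes "finite S" "2 \<le> card S" obtains w where "w \<in> S" "w \<noteq> q"
proof -
  have "\<not> S \<subseteq> {q}"
  proof
    assume "S \<subseteq> {q}"
    then have "card S \<le> card {q}" by (intro card_mono) auto
    then show False using assms by simp
  qed
  then show ?thesis using that by auto
qed

lemma ext_iso:
  assumes t: "mytree V E" and K1: "1 \<le> K"
    and pb: "bij_betw p {..<2*K} (core V E)"
    and padj: "\<forall>i<2*K. \<forall>i'<2*K. E (p i) (p i') \<longleftrightarrow> (i = Suc i' \<or> i' = Suc i)"
    and hub: "\<forall>u\<in>core V E. \<forall>v\<in>core V E. 3 \<le> deg V E u \<longrightarrow> 3 \<le> deg V E v \<longrightarrow> u = v"
  shows "\<exists>b<2*K. graph_iso V E {..<card V} (T_edge (card V) K (Suc b))"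
proof -
  define n where "n = card V"
  define C where "C = core V E"
  define L where "L = lvs V E"
  have sg: "simple_graph V E" using t mytree_sg by auto
  have fV: "finite V" using sg_finite[OF sg] .
  have CV: "C \<subseteq> V" unfolding C_def core_def by auto
  have cC: "card C = 2*K" using pb C_def bij_betw_same_card by fastforce
  have n2: "2 \<le> n" using card_mono[OF fV CV] cC K1 n_def by simp
  have U: "L \<union> C = V" and D: "L \<inter> C = {}" and cV: "n = card L + card C" and L2: "2 \<le> card L"
    using card_lvs[OF t] n2 unfolding C_def L_def n_def by auto
  have n3: "3 \<le> n" using cV L2 cC K1 by simp
  have fL: "finite L" using fV U by auto
  have pC: "\<And>i. i < 2*K \<Longrightarrow> p i \<in> C" using pb C_def bij_betwE by blast
  have pinj: "\<And>i i'. i < 2*K \<Longrightarrow> i' < 2*K \<Longrightarrow> p i = p i' \<longleftrightarrow> i = i'"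
    using pb unfolding bij_betw_def inj_on_def by auto
  have psurj: "\<And>v. v \<in> C \<Longrightarrow> \<exists>i<2*K. v = p i" using pb C_def unfolding bij_betw_def by auto
  have Esym: "\<And>u v. E u v \<longleftrightarrow> E v u" using sg_E[OF sg] by blast
  define nb where "nb z = (THE w. {u\<in>V. E z u} = {w})" for z
  have nbL: "\<And>z. z \<in> L \<Longrightarrow> {u\<in>V. E z u} = {nb z} \<and> nb z \<in> C"
  proof -
    fix z assume z: "z \<in> L"
    obtain w where w: "{u\<in>V. E z u} = {w}" "w \<in> core V E" using leaf_core_nbr[OF t _ ] z n3 n_def L_def by metis
    then have "nb z = w" unfolding nb_def by auto
    then show "{u\<in>V. E z u} = {nb z} \<and> nb z \<in> C" using w C_def by auto
  qed
  have nbE: "\<And>z u. z \<in> L \<Longrightarrow> E z u \<longleftrightarrow> u = nb z"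
  proof -
    fix z u assume z: "z \<in> L"
    have "nb z \<in> {u\<in>V. E z u}" using nbL[OF z] by auto
    then show "E z u \<longleftrightarrow> u = nb z" using nbL[OF z] sg_E[OF sg, of z u] by auto
  qed
  have LV: "L \<subseteq> V" using U by auto
  have pV: "\<And>i. i < 2*K \<Longrightarrow> p i \<in> V" using pC CV by auto
  have endleaf: "\<And>i j. i < 2*K \<Longrightarrow> j < 2*K \<Longrightarrow> (\<forall>i'<2*K. E (p i) (p i') \<longrightarrow> i' = j)
      \<Longrightarrow> \<exists>x\<in>L. E (p i) x"
  proof -
    fix i j assume i: "i < 2*K" and j: "j < 2*K" and only: "\<forall>i'<2*K. E (p i) (p i') \<longrightarrow> i' = j"
    have "2 \<le> deg V E (p i)" using pC[OF i] by (simp add: C_def core_def)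
    then have c2: "2 \<le> card {u\<in>V. E (p i) u}" unfolding deg_def .
    have "finite {u\<in>V. E (p i) u}" using fV by simp
    from this c2 obtain w where w: "w \<in> {u\<in>V. E (p i) u}" "w \<noteq> p j" by (rule two_elems)
    have "w \<notin> C"
    proof
      assume "w \<in> C"
      then obtain i' where "i' < 2*K" "w = p i'" using psurj by auto
      then show False using only w by auto
    qed
    then show "\<exists>x\<in>L. E (p i) x" using w U by auto
  qed
  obtain x where xL: "x \<in> L" and ex: "E (p 0) x"
  proof -
    have "\<forall>i'<2*K. E (p 0) (p i') \<longrightarrow> i' = 1" using padj K1 by auto
    then show ?thesis using endleaf[of 0 1] K1 that by auto
  qed
  obtain y where yL: "y \<in> L" and ey: "E (p (2*K-1)) y"
  proof -
    have "\<forall>i'<2*K. E (p (2*K-1)) (p i') \<longrightarrow> i' = 2*K-2" using padj K1 by auto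
    then show ?thesis using endleaf[of "2*K-1" "2*K-2"] K1 that by auto
  qed
  have nbx: "nb x = p 0" using nbE[OF xL] ex Esym by metis
  have nby: "nb y = p (2*K-1)" using nbE[OF yL] ey Esym by metis
  have xy: "x \<noteq> y" using nbx nby pinj[of 0 "2*K-1"] K1 by auto
  define R where "R = L - {x,y}"
  have cR: "card R = n - 2*K - 2" using cV cC xL yL xy fL R_def by (simp add: card_Diff_subset)
  have RL: "R \<subseteq> L" using R_def by auto
  have deg3: "\<And>r. r \<in> R \<Longrightarrow> 3 \<le> deg V E (nb r)"
  proof -
    fix r assume r: "r \<in> R"
    then have rL: "r \<in> L" and rx: "r \<noteq> x" and ry: "r \<noteq> y" using R_def by auto
    obtain i where i: "i < 2*K" "nb r = p i" using psurj nbL[OF rL] by blast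
    have Er: "E (p i) r" using nbE[OF rL] i Esym by metis
    have pnL: "\<And>j. j < 2*K \<Longrightarrow> p j \<notin> L" using pC D by auto
    consider "i = 0" | "i = 2*K-1" "i \<noteq> 0" | "0 < i" "i < 2*K-1" using i by linarith
    then show "3 \<le> deg V E (nb r)"
    proof cases
      case 1
      have "card {p 1, x, r} = 3" using pnL[of 1] K1 xL rL rx by (intro card3) auto
      moreover have "{p 1, x, r} \<subseteq> {w. E (p i) w}" using padj K1 1 ex Er by auto
      ultimately show ?thesis using deg_ge_card[OF sg] i by metis
    next
      case 2
      have "card {p (2*K-2), y, r} = 3" using pnL[of "2*K-2"] K1 yL rL ry by (intro card3) auto
      moreover have "{p (2*K-2), y, r} \<subseteq> {w. E (p i) w}" using padj K1 2 ey Er by auto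
      ultimately show ?thesis using deg_ge_card[OF sg] i by metis
    next
      case 3
      have "p (i-1) \<noteq> p (i+1)" using pinj[of "i-1" "i+1"] 3 by auto
      moreover have "i-1 < 2*K" "i+1 < 2*K" using 3 by auto
      ultimately have "card {p (i-1), p (i+1), r} = 3" using pnL[of "i-1"] pnL[of "i+1"] rL by (intro card3) auto
      moreover have "{p (i-1), p (i+1), r} \<subseteq> {w. E (p i) w}" using padj 3 Er by auto
      ultimately show ?thesis using deg_ge_card[OF sg] i by metis
    qed
  qed
  obtain b where b: "b < 2*K" and bR: "\<forall>r\<in>R. nb r = p b"
  proof (cases "R = {}")
    case True
    have "0 < 2*K" using K1 by simp
    then show ?thesis using True by (intro that[of 0]) auto
  next
    case False
    then obtain r0 where r0: "r0 \<in> R" by auto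
    obtain b where b: "b < 2*K" "nb r0 = p b" using psurj nbL RL r0 by blast
    have "\<forall>r\<in>R. nb r = p b"
    proof
      fix r assume r: "r \<in> R"
      have "nb r \<in> core V E" "nb r0 \<in> core V E" using nbL RL r r0 C_def by auto
      then have "nb r = nb r0" using hub deg3[OF r] deg3[OF r0] by blast
      then show "nb r = p b" using b by simp
    qed
    then show ?thesis using that b by auto
  qed
  have "finite R" using fL RL finite_subset by auto
  moreover have "card {2*K+2..<n} = card R" using cR by simp
  ultimately obtain g where g: "bij_betw g {2*K+2..<n} R"
    using finite_same_card_bij[of "{2*K+2..<n}" R] by auto
  define \<phi> where "\<phi> i = (if i = 0 then x else if i \<le> 2*K then p (i-1) else if i = 2*K+1 then y else g i)" for i
  have gR: "\<And>i. 2*K+2 \<le> i \<Longrightarrow> i < n \<Longrightarrow> g i \<in> R" using g bij_betwE by fastforce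
  have img: "\<phi> ` {..<n} = V"
  proof
    show "\<phi> ` {..<n} \<subseteq> V"
    proof
      fix v assume "v \<in> \<phi> ` {..<n}"
      then obtain i where i: "i < n" "v = \<phi> i" by auto
      show "v \<in> V" using i gR[of i] pV[of "i-1"] xL yL LV RL unfolding \<phi>_def by (auto split: if_splits)
    qed
  next
    show "V \<subseteq> \<phi> ` {..<n}"
    proof
      fix v assume v: "v \<in> V"
      have nK: "2*K+2 \<le> n" using cV cC L2 by simp
      show "v \<in> \<phi> ` {..<n}"
      proof (cases "v \<in> C")
        case True
        then obtain i where i: "i < 2*K" "v = p i" using psurj by auto
        then have "\<phi> (Suc i) = v" unfolding \<phi>_def by auto
        moreover have "Suc i < n" using i nK by simp
        ultimately show ?thesis by (intro rev_image_eqI[of "Suc i"]) auto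
      next
        case False
        then have vL: "v \<in> L" using v U by auto
        consider "v = x" | "v = y" | "v \<in> R" using vL R_def by auto
        then show ?thesis
        proof cases
          case 1 then have "\<phi> 0 = v" unfolding \<phi>_def by simp
          moreover have "0 < n" using nK by simp
          ultimately show ?thesis by (intro rev_image_eqI[of 0]) auto
        next
          case 2 then have "\<phi> (2*K+1) = v" unfolding \<phi>_def by simp
          moreover have "2*K+1 < n" using nK by simp
          ultimately show ?thesis by (intro rev_image_eqI[of "2*K+1"]) auto
        next
          case 3
          then obtain i where i: "i \<in> {2*K+2..<n}" "v = g i" using g unfolding bij_betw_def by auto
          then have "\<phi> i = v" unfolding \<phi>_def by auto
          then show ?thesis using i by (intro rev_image_eqI[of i]) auto
        qed
      qed
    qed
  qed
  have inj: "inj_on \<phi> {..<n}" using img n_def by (intro eq_card_imp_inj_on) auto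
  have bij: "bij_betw \<phi> {..<n} V" using inj img unfolding bij_betw_def by auto
  have \<phi>inj: "\<And>i i'. i < n \<Longrightarrow> i' < n \<Longrightarrow> \<phi> i = \<phi> i' \<longleftrightarrow> i = i'"
    using inj unfolding inj_on_def by auto
  define m where "m i = (if i = 0 then 1 else if i = 2*K+1 then 2*K else Suc b)" for i
  have leafidx: "\<And>i. i < n \<Longrightarrow> (i = 0 \<or> 2*K+1 \<le> i) \<Longrightarrow> \<phi> i \<in> L \<and> nb (\<phi> i) = \<phi> (m i) \<and> m i < n"
  proof -
    fix i assume i: "i < n" and li: "i = 0 \<or> 2*K+1 \<le> i"
    have nK: "2*K+2 \<le> n" using cV cC L2 by simp
    consider "i = 0" | "i = 2*K+1" | "2*K+2 \<le> i" using li by linarith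
    then show "\<phi> i \<in> L \<and> nb (\<phi> i) = \<phi> (m i) \<and> m i < n"
    proof cases
      case 1 then show ?thesis using xL nbx nK K1 unfolding \<phi>_def m_def by auto
    next
      case 2 then show ?thesis using yL nby nK K1 unfolding \<phi>_def m_def by auto
    next
      case 3
      then have "\<phi> i = g i" "g i \<in> R" using gR[OF 3 i] unfolding \<phi>_def by auto
      then show ?thesis using RL bR b nK 3 unfolding \<phi>_def m_def by auto
    qed
  qed
  have leafadj: "\<And>i i'. i < n \<Longrightarrow> i' < n \<Longrightarrow> (i = 0 \<or> 2*K+1 \<le> i) \<Longrightarrow> E (\<phi> i) (\<phi> i') \<longleftrightarrow> i' = m i"
  proof -
    fix i i' assume i: "i < n" and i': "i' < n" and li: "i = 0 \<or> 2*K+1 \<le> i"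
    have "E (\<phi> i) (\<phi> i') \<longleftrightarrow> \<phi> i' = nb (\<phi> i)" using nbE leafidx[OF i li] by blast
    also have "\<dots> \<longleftrightarrow> \<phi> i' = \<phi> (m i)" using leafidx[OF i li] by simp
    also have "\<dots> \<longleftrightarrow> i' = m i" using \<phi>inj i' leafidx[OF i li] by blast
    finally show "E (\<phi> i) (\<phi> i') \<longleftrightarrow> i' = m i" .
  qed
  have adj: "\<forall>i\<in>{..<n}. \<forall>i'\<in>{..<n}. E (\<phi> i) (\<phi> i') \<longleftrightarrow> T_edge n K (Suc b) i i'"
  proof (intro ballI)
    fix i i' assume "i \<in> {..<n}" "i' \<in> {..<n}"
    then have i: "i < n" and i': "i' < n" by auto
    show "E (\<phi> i) (\<phi> i') \<longleftrightarrow> T_edge n K (Suc b) i i'"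
    proof (cases "i = 0 \<or> 2*K+1 \<le> i")
      case True
      then show ?thesis using leafadj[OF i i' True] i i' b unfolding T_edge_def m_def by auto
    next
      case F1: False
      show ?thesis
      proof (cases "i' = 0 \<or> 2*K+1 \<le> i'")
        case True
        then have "E (\<phi> i) (\<phi> i') \<longleftrightarrow> i = m i'" using leafadj[OF i' i True] Esym by blast
        then show ?thesis using True F1 i i' b unfolding T_edge_def m_def by auto
      next
        case False
        then have "\<phi> i = p (i-1)" "\<phi> i' = p (i'-1)" "i - 1 < 2*K" "i'-1 < 2*K" using F1 unfolding \<phi>_def by auto
        then have "E (\<phi> i) (\<phi> i') \<longleftrightarrow> (i-1 = Suc (i'-1) \<or> i'-1 = Suc (i-1))" using padj by auto
        then show ?thesis using False F1 i i' unfolding T_edge_def by auto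
      qed
    qed
  qed
  have "graph_iso V E {..<n} (T_edge n K (Suc b))" by (rule iso_inv[OF bij adj])
  then show ?thesis using b n_def by auto
qed




lemma iso_path:
  assumes "graph_iso V E W F"
  shows "\<exists>\<phi>. bij_betw \<phi> W V \<and> (\<forall>i\<in>W. \<forall>i'\<in>W. E (\<phi> i) (\<phi> i') \<longleftrightarrow> F i i')"
proof -
  obtain f where bf: "bij_betw f V W" and e: "\<forall>u\<in>V. \<forall>v\<in>V. E u v \<longleftrightarrow> F (f u) (f v)"
    using assms graph_iso_def by metis
  define \<phi> where "\<phi> = inv_into V f"
  have b: "bij_betw \<phi> W V" using bij_betw_inv_into[OF bf] \<phi>_def by simp
  have fi: "\<And>i. i \<in> W \<Longrightarrow> f (\<phi> i) = i" using bf \<phi>_def by (simp add: bij_betw_inv_into_right)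
  have "\<forall>i\<in>W. \<forall>i'\<in>W. E (\<phi> i) (\<phi> i') \<longleftrightarrow> F i i'"
  proof (intro ballI)
    fix i i' assume i: "i \<in> W" and i': "i' \<in> W"
    have "\<phi> i \<in> V" "\<phi> i' \<in> V" using b i i' bij_betwE by blast+
    then show "E (\<phi> i) (\<phi> i') \<longleftrightarrow> F i i'" using e fi[OF i] fi[OF i'] by metis
  qed
  then show ?thesis using b by blast
qed

lemma iso_trans:
  assumes "graph_iso V E W F" "graph_iso W F U G" shows "graph_iso V E U G"
proof -
  obtain f where bf: "bij_betw f V W" and e: "\<forall>u\<in>V. \<forall>v\<in>V. E u v \<longleftrightarrow> F (f u) (f v)"
    using assms(1) graph_iso_def by metis
  obtain h where bh: "bij_betw h W U" and e2: "\<forall>u\<in>W. \<forall>v\<in>W. F u v \<longleftrightarrow> G (h u) (h v)"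
    using assms(2) graph_iso_def by metis
  have "bij_betw (h \<circ> f) V U" using bf bh bij_betw_trans by blast
  moreover have "\<forall>u\<in>V. \<forall>v\<in>V. E u v \<longleftrightarrow> G ((h \<circ> f) u) ((h \<circ> f) v)"
  proof (intro ballI)
    fix u v assume u: "u \<in> V" and v: "v \<in> V"
    have fu: "f u \<in> W" "f v \<in> W" using bf u v bij_betwE by blast+
    have "E u v \<longleftrightarrow> F (f u) (f v)" using e u v by blast
    also have "\<dots> \<longleftrightarrow> G (h (f u)) (h (f v))" using e2 fu by blast
    finally show "E u v \<longleftrightarrow> G ((h \<circ> f) u) ((h \<circ> f) v)" by simp
  qed
  ultimately show ?thesis unfolding graph_iso_def by blast
qed

lemma T_edge_path: "n = 2*K+2 \<Longrightarrow> i < n \<Longrightarrow> i' < n \<Longrightarrow> T_edge n K a i i' \<longleftrightarrow> (i = Suc i' \<or> i' = Suc i)"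
  unfolding T_edge_def by auto

lemma path_lemma:
  "mytree V E \<Longrightarrow> (\<forall>c\<in>V. \<not> domc V E j c) \<Longrightarrow> card V = 2*j+2 \<Longrightarrow>
   \<exists>p. bij_betw p {..<2*j+2} V \<and> (\<forall>i<2*j+2. \<forall>i'<2*j+2. E (p i) (p i') \<longleftrightarrow> (i = Suc i' \<or> i' = Suc i))"
proof (induction j arbitrary: V E)
  case 0
  have sg: "simple_graph V E" using 0 mytree_sg by auto
  obtain u v where uv: "V = {u,v}" "u \<noteq> v" using 0 card_2_iff by (metis mult_0_right add_0)
  have "1 \<le> deg V E u" using tree_deg_pos[OF 0(1)] 0 uv by auto
  then obtain w where w: "E u w" using deg_ge1_iff[OF sg] by auto
  then have "w = v" using sg_E[OF sg w] uv by auto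
  then have Euv: "E u v" "E v u" using w sg_E[OF sg w] by auto
  have nl: "\<not> E u u" "\<not> E v v" using sg_E[OF sg, of u u] sg_E[OF sg, of v v] by auto
  define p where "p i = (if i = 0 then u else v)" for i :: nat
  have l2: "{..<2::nat} = {0,1}" by auto
  have "p ` {..<2} = V" unfolding l2 p_def uv by auto
  moreover have "inj_on p {..<2}" unfolding p_def inj_on_def using uv by auto
  ultimately have "bij_betw p {..<2} V" unfolding bij_betw_def by auto
  moreover have "\<forall>i<2. \<forall>i'<2. E (p i) (p i') \<longleftrightarrow> (i = Suc i' \<or> i' = Suc i)"
    unfolding p_def using Euv nl by (auto simp: less_2_cases_iff)
  ultimately show ?case unfolding mult_0_right add_0 by blast
next
  case (Suc j)
  define n where "n = card V"
  define C where "C = core V E"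
  define L where "L = lvs V E"
  have sg: "simple_graph V E" using Suc.prems mytree_sg by auto
  have c3: "3 \<le> card V" using Suc.prems by simp
  have tC: "mytree C (coreE V E)" using core_tree[OF Suc.prems(1) c3] C_def by simp
  have nd: "\<forall>c\<in>C. \<not> domc C (coreE V E) j c"
    using dom_lift[OF Suc.prems(1) c3] Suc.prems(2) C_def domc_def by metis
  have cCge: "2*j+2 \<le> card C" using count_lemma[OF tC nd] .
  have L2: "2 \<le> card L" and cV: "card V = card L + card C"
    and SV: "(\<Sum>v\<in>V. deg V E v) = card L + (\<Sum>v\<in>C. deg V E v)"
    using card_lvs[OF Suc.prems(1)] c3 C_def L_def by auto
  have cC: "card C = 2*j+2" and cL: "card L = 2" using cCge L2 cV Suc.prems(3) by auto
  obtain p where pb: "bij_betw p {..<2*j+2} C"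
    and padj: "\<forall>i<2*j+2. \<forall>i'<2*j+2. coreE V E (p i) (p i') \<longleftrightarrow> (i = Suc i' \<or> i' = Suc i)"
    using Suc.IH[OF tC nd cC] by blast
  have pC: "\<And>i. i < 2*j+2 \<Longrightarrow> p i \<in> C" using pb bij_betwE by blast
  have padj': "\<forall>i<2*(Suc j). \<forall>i'<2*(Suc j). E (p i) (p i') \<longleftrightarrow> (i = Suc i' \<or> i' = Suc i)"
  proof (intro allI impI)
    fix i i' assume i: "i < 2*Suc j" and i': "i' < 2*Suc j"
    have "coreE V E (p i) (p i') \<longleftrightarrow> E (p i) (p i')" using pC[of i] pC[of i'] i i'
      by (simp add: coreE_def C_def)
    then show "E (p i) (p i') \<longleftrightarrow> (i = Suc i' \<or> i' = Suc i)" using padj i i' by simp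
  qed
  have pb': "bij_betw p {..<2*(Suc j)} (core V E)" using pb C_def by simp
  have fC: "finite C" using sg_finite[OF sg] unfolding C_def core_def by auto
  have hub: "\<forall>u\<in>core V E. \<forall>v\<in>core V E. 3 \<le> deg V E u \<longrightarrow> 3 \<le> deg V E v \<longrightarrow> u = v"
  proof (intro ballI impI)
    fix u v assume u: "u \<in> core V E" and "v \<in> core V E" and d3: "3 \<le> deg V E u" "3 \<le> deg V E v"
    have "(\<Sum>v\<in>C. 2) < (\<Sum>v\<in>C. deg V E v)"
      using u d3 fC by (intro sum_strict_mono_ex1) (auto simp: C_def core_def)
    moreover have "(\<Sum>v\<in>V. deg V E v) = 2 * (card V - 1)" using Suc.prems(1) by (simp add: mytree_def)
    ultimately show "u = v" using SV cC cL Suc.prems(3) by simp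
  qed
  have K1: "1 \<le> Suc j" by simp
  obtain b where "b < 2*Suc j" and iso: "graph_iso V E {..<card V} (T_edge (card V) (Suc j) (Suc b))"
    using ext_iso[OF Suc.prems(1) K1 pb' padj' hub] by blast
  obtain \<phi> where \<phi>: "bij_betw \<phi> {..<card V} V"
    and e: "\<forall>i\<in>{..<card V}. \<forall>i'\<in>{..<card V}. E (\<phi> i) (\<phi> i') \<longleftrightarrow> T_edge (card V) (Suc j) (Suc b) i i'"
    using iso_path[OF iso] by blast
  have adj\<phi>: "\<forall>i<2*Suc j+2. \<forall>i'<2*Suc j+2. E (\<phi> i) (\<phi> i') \<longleftrightarrow> (i = Suc i' \<or> i' = Suc i)"
  proof (intro allI impI)
    fix i i' assume i: "i < 2*Suc j+2" and i': "i' < 2*Suc j+2"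
    then have "E (\<phi> i) (\<phi> i') \<longleftrightarrow> T_edge (card V) (Suc j) (Suc b) i i'" using e Suc.prems(3) by simp
    also have "\<dots> \<longleftrightarrow> (i = Suc i' \<or> i' = Suc i)"
    proof -
      have n: "card V = 2*Suc j + 2" using Suc.prems(3) by simp
      have iV: "i < card V" "i' < card V" using i i' Suc.prems(3) by simp_all
      show ?thesis using T_edge_path[OF n iV] .
    qed
    finally show "E (\<phi> i) (\<phi> i') \<longleftrightarrow> (i = Suc i' \<or> i' = Suc i)" .
  qed
  have cV': "{..<card V} = {..<2*Suc j+2}" using Suc.prems(3) by simp
  have b2: "bij_betw \<phi> {..<2*Suc j+2} V" using \<phi> unfolding cV' .
  show ?case by (rule exI[of _ \<phi>], rule conjI[OF b2 adj\<phi>])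
qed

lemma reflect:
  assumes "1 \<le> a" "a \<le> 2*K" "2*K+2 \<le> n"
  shows "graph_iso {..<n} (T_edge n K a) {..<n} (T_edge n K (2*K+1-a))"
proof -
  define \<rho> where "\<rho> i = (if i \<le> 2*K+1 then 2*K+1-i else i)" for i
  have inv: "\<And>i. \<rho> (\<rho> i) = i" unfolding \<rho>_def by auto
  have into: "\<And>i. i < n \<Longrightarrow> \<rho> i < n" unfolding \<rho>_def using assms by auto
  have "bij_betw \<rho> {..<n} {..<n}"
    by (rule bij_betw_byWitness[where f'=\<rho>]) (auto simp: into inv)
  moreover have "\<forall>u\<in>{..<n}. \<forall>v\<in>{..<n}. T_edge n K a u v \<longleftrightarrow> T_edge n K (2*K+1-a) (\<rho> u) (\<rho> v)"
    using assms unfolding T_edge_def \<rho>_def by auto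
  ultimately show ?thesis unfolding graph_iso_def by blast
qed




lemma iso_deg:
  assumes bf: "bij_betw f V W" and e: "\<forall>u\<in>V. \<forall>v\<in>V. E u v \<longleftrightarrow> F (f u) (f v)" and u: "u \<in> V"
  shows "deg V E u = deg W F (f u)"
proof -
  have "f ` {w\<in>V. E u w} = {w'\<in>W. F (f u) w'}"
  proof
    show "f ` {w\<in>V. E u w} \<subseteq> {w'\<in>W. F (f u) w'}" using bf e u bij_betwE by fastforce
  next
    show "{w'\<in>W. F (f u) w'} \<subseteq> f ` {w\<in>V. E u w}"
    proof
      fix w' assume w': "w' \<in> {w'\<in>W. F (f u) w'}"
      then obtain w where w: "w \<in> V" "w' = f w" using bf unfolding bij_betw_def by auto
      then have "E u w" using e u w' by auto
      then show "w' \<in> f ` {w\<in>V. E u w}" using w by auto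
    qed
  qed
  moreover have "inj_on f {w\<in>V. E u w}" using bf unfolding bij_betw_def by (auto intro: inj_on_subset)
  ultimately show ?thesis unfolding deg_def by (metis card_image)
qed

lemma iso_Pi:
  assumes "graph_iso V E W F"
  shows "Pi1 V E = Pi1 W F \<and> Pi2 V E = Pi2 W F"
proof -
  obtain f where bf: "bij_betw f V W" and e: "\<forall>u\<in>V. \<forall>v\<in>V. E u v \<longleftrightarrow> F (f u) (f v)"
    using assms unfolding graph_iso_def by blast
  have d: "\<And>u. u \<in> V \<Longrightarrow> deg V E u = deg W F (f u)" using iso_deg[OF bf e] .
  have "Pi1 W F = (\<Prod>u\<in>V. deg W F (f u) ^ 2)" unfolding Pi1_def
    using prod.reindex_bij_betw[OF bf, of "\<lambda>w. deg W F w ^ 2"] by simp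
  also have "\<dots> = Pi1 V E" unfolding Pi1_def using d by simp
  finally have 1: "Pi1 V E = Pi1 W F" by simp
  have "Pi2 W F = (\<Prod>u\<in>V. deg W F (f u) ^ deg W F (f u))" unfolding Pi2_def
    using prod.reindex_bij_betw[OF bf, of "\<lambda>w. deg W F w ^ deg W F w"] by simp
  also have "\<dots> = Pi2 V E" unfolding Pi2_def using d by simp
  finally have 2: "Pi2 V E = Pi2 W F" by simp
  show ?thesis using 1 2 by simp
qed

lemma Tdeg:
  assumes K: "1 \<le> K" and a: "1 \<le> a" "a \<le> 2*K" and n: "2*K+2 \<le> n" and u: "u < n"
  shows "deg {..<n} (T_edge n K a) u = (if u = a then n - 2*K else if 1 \<le> u \<and> u \<le> 2*K then 2 else 1)"
proof -
  let ?N = "{v\<in>{..<n}. T_edge n K a u v}"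
  consider "u = a" | "u \<noteq> a" "1 \<le> u" "u \<le> 2*K" | "u = 0" | "u = 2*K+1" | "2*K+2 \<le> u" by linarith
  then show ?thesis
  proof cases
    case 1
    have "?N = {a-1, a+1} \<union> {2*K+2..<n}" using 1 a n unfolding T_edge_def by auto
    moreover have "card ({a-1, a+1} \<union> {2*K+2..<n}) = 2 + (n - (2*K+2))"
    proof -
      have "{a-1, a+1} \<inter> {2*K+2..<n} = {}" using a by auto
      moreover have "card {a-1, a+1} = 2" using a by simp
      ultimately show ?thesis by (simp add: card_Un_disjoint)
    qed
    ultimately show ?thesis using 1 n unfolding deg_def by simp
  next
    case 2
    have "?N = {u-1, u+1}" using 2 n unfolding T_edge_def by auto
    then show ?thesis using 2 unfolding deg_def by simp
  next
    case 3
    have "?N = {1}" using 3 a n unfolding T_edge_def by auto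
    then show ?thesis using 3 a unfolding deg_def by simp
  next
    case 4
    have "?N = {2*K}" using 4 a n unfolding T_edge_def by auto
    then show ?thesis using 4 a unfolding deg_def by simp
  next
    case 5
    have "?N = {a}" using 5 a u unfolding T_edge_def by auto
    then show ?thesis using 5 a unfolding deg_def by simp
  qed
qed

lemma T_prod:
  assumes K: "1 \<le> K" and a: "1 \<le> a" "a \<le> 2*K" and n: "2*K+2 \<le> n" and h1: "h 1 = (1::nat)"
  shows "(\<Prod>u\<in>{..<n}. h (deg {..<n} (T_edge n K a) u)) = h (n - 2*K) * h 2 ^ (2*K-1)"
proof -
  let ?d = "\<lambda>u. deg {..<n} (T_edge n K a) u"
  have "(\<Prod>u\<in>{..<n}. h (?d u)) = (\<Prod>u\<in>{1..2*K}. h (?d u))"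
  proof (rule prod.mono_neutral_right)
    show "finite {..<n}" by simp
    show "{1..2*K} \<subseteq> {..<n}" using n by auto
    show "\<forall>i\<in>{..<n} - {1..2*K}. h (?d i) = 1"
    proof
      fix i assume i: "i \<in> {..<n} - {1..2*K}"
      then have "?d i = 1" using Tdeg[OF K a n, of i] a by auto
      then show "h (?d i) = 1" using h1 by simp
    qed
  qed
  also have "\<dots> = h (?d a) * (\<Prod>u\<in>{1..2*K} - {a}. h (?d u))"
    using a by (intro prod.remove) auto
  also have "(\<Prod>u\<in>{1..2*K} - {a}. h (?d u)) = (\<Prod>u\<in>{1..2*K} - {a}. h 2)"
  proof (rule prod.cong)
    fix u assume "u \<in> {1..2*K} - {a}"
    then show "h (?d u) = h 2" using Tdeg[OF K a n, of u] n by auto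
  qed simp
  also have "\<dots> = h 2 ^ (2*K-1)" using a by simp
  also have "?d a = n - 2*K" using Tdeg[OF K a n, of a] a n by simp
  finally show ?thesis .
qed

lemma T_Pi:
  assumes K: "1 \<le> K" and a: "1 \<le> a" "a \<le> 2*K" and n: "2*K+2 \<le> n"
  shows "Pi1 {..<n} (T_edge n K a) = 4^(2*K-1) * (n - 2*K)^2
    \<and> Pi2 {..<n} (T_edge n K a) = 4^(2*K-1) * (n - 2*K)^(n - 2*K)"
proof -
  have 1: "Pi1 {..<n} (T_edge n K a) = (n - 2*K)^2 * (2^2)^(2*K-1)"
    unfolding Pi1_def by (rule T_prod[OF K a n, of "\<lambda>d. d^2"]) simp
  have 2: "Pi2 {..<n} (T_edge n K a) = (n - 2*K)^(n - 2*K) * (2^2)^(2*K-1)"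
    unfolding Pi2_def by (rule T_prod[OF K a n, of "\<lambda>d. d^d"]) simp
  show ?thesis using 1 2 by simp
qed




theorem theorem3p2:
  fixes V :: "'a set" and E :: "'a \<Rightarrow> 'a \<Rightarrow> bool" and k n :: nat
  assumes "k \<ge> 2" and "is_tree V E" and "card V = n" and "gamma_k V E k = 2"
  shows "Pi1 V E \<ge> 4^(2*k-1) * (n - 2*k)^2
    \<and> Pi2 V E \<le> 4^(2*k-1) * (n - 2*k)^(n - 2*k)
    \<and> (Pi1 V E = 4^(2*k-1) * (n - 2*k)^2 \<longleftrightarrow>
         (\<exists>a\<in>{1..k}. graph_iso V E {..<n} (T_edge n k a)))
    \<and> (Pi2 V E = 4^(2*k-1) * (n - 2*k)^(n - 2*k) \<longleftrightarrow>
         (\<exists>a\<in>{1..k}. graph_iso V E {..<n} (T_edge n k a)))"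
proof -
  have k2: "2 \<le> k" using assms(1) .
  have t: "mytree V E" using assms(2) is_tree_mytree by blast
  have sg: "simple_graph V E" using t mytree_sg by auto
  have fV: "finite V" using sg_finite[OF sg] .
  have nd: "\<forall>c\<in>V. \<not> domc V E k c"
  proof (intro ballI notI)
    fix c assume c: "c \<in> V" and d: "domc V E k c"
    have "dist_k_dominating V E k {c}" using c d unfolding dist_k_dominating_def domc_def by auto
    then have "\<exists>D. dist_k_dominating V E k D \<and> card D = 1" by (intro exI[of _ "{c}"]) simp
    then have "gamma_k V E k \<le> 1" unfolding gamma_k_def by (rule Least_le)
    then show False using assms(4) by simp
  qed
  have nge: "2*k+2 \<le> n" using count_lemma[OF t nd] assms(3) by simp
  have c3: "3 \<le> card V" using nge k2 assms(3) by simp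
  define C where "C = core V E"
  define L where "L = lvs V E"
  define m where "m = card C"
  have tC: "mytree C (coreE V E)" using core_tree[OF t c3] C_def by simp
  have ndC: "\<forall>c\<in>C. \<not> domc C (coreE V E) (k-1) c"
  proof (intro ballI notI)
    fix c assume "c \<in> C" "domc C (coreE V E) (k-1) c"
    then have "domc V E (Suc (k-1)) c" using dom_lift[OF t c3] C_def by simp
    moreover have "Suc (k-1) = k" using k2 by simp
    ultimately show False using nd by (metis domc_def)
  qed
  have mge: "2*k \<le> m" using count_lemma[OF tC ndC] k2 m_def by simp
  have L2: "2 \<le> card L" and cV: "card V = card L + card C"
    and SV: "(\<Sum>v\<in>V. deg V E v) = card L + (\<Sum>v\<in>C. deg V E v)"
    and U: "L \<union> C = V" and D: "L \<inter> C = {}"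
    using card_lvs[OF t] c3 C_def L_def by auto
  have tsum: "(\<Sum>v\<in>V. deg V E v) = 2 * (card V - 1)" using t by (simp add: mytree_def)
  have fC: "finite C" using fV U by auto
  define g where "g v = deg V E v - 2" for v
  have degC: "\<And>v. v \<in> C \<Longrightarrow> deg V E v = 2 + g v" unfolding g_def C_def core_def by auto
  have "(\<Sum>v\<in>C. deg V E v) = (\<Sum>v\<in>C. 2 + g v)" using degC by simp
  also have "\<dots> = (\<Sum>v\<in>C. 2) + (\<Sum>v\<in>C. g v)" by (rule sum.distrib)
  also have "\<dots> = 2 * m + (\<Sum>v\<in>C. g v)" by (simp add: m_def)
  finally have "(\<Sum>v\<in>C. deg V E v) = 2 * m + (\<Sum>v\<in>C. g v)" .
  then have Sg: "2 + (\<Sum>v\<in>C. g v) = n - m" using SV tsum cV assms(3) L2 m_def by simp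
  have m2: "m + 2 \<le> n" using cV L2 assms(3) m_def by simp
  define P where "P = (\<Prod>v\<in>C. 2 + g v)"
  have Pi1eq: "Pi1 V E = P^2"
  proof -
    have "Pi1 V E = (\<Prod>v\<in>C. deg V E v ^ 2)" unfolding Pi1_def
    proof (rule prod.mono_neutral_right)
      show "finite V" using fV .
      show "C \<subseteq> V" using U by auto
      show "\<forall>i\<in>V - C. deg V E i ^ 2 = 1" using U D unfolding L_def lvs_def by auto
    qed
    also have "\<dots> = (\<Prod>v\<in>C. (2 + g v) ^ 2)" using degC by simp
    also have "\<dots> = P^2" unfolding P_def by (rule prod_power_distrib[symmetric])
    finally show ?thesis .
  qed
  have Pi2eq: "Pi2 V E = (\<Prod>v\<in>C. (2 + g v) ^ (2 + g v))"
  proof -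
    have "Pi2 V E = (\<Prod>v\<in>C. deg V E v ^ deg V E v)" unfolding Pi2_def
    proof (rule prod.mono_neutral_right)
      show "finite V" using fV .
      show "C \<subseteq> V" using U by auto
      show "\<forall>i\<in>V - C. deg V E i ^ deg V E i = 1" using U D unfolding L_def lvs_def by auto
    qed
    also have "\<dots> = (\<Prod>v\<in>C. (2 + g v) ^ (2 + g v))" using degC by simp
    finally show ?thesis .
  qed
  have g1: "2^m * (n - m) \<le> 2 * P"
    using G1[OF fC, of g] by (simp only: Sg m_def[symmetric] P_def[symmetric])
  have m1: "2^(2*k) * (n - 2*k) \<le> 2^m * (n - m) \<and> (2*k < m \<longrightarrow> 2^(2*k) * (n - 2*k) < 2^m * (n - m))"
    using M1[of "2*k" "m - 2*k" n] mge m2 by simp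
  have g2: "4 * Pi2 V E \<le> 4^m * (n - m)^(n - m)"
    using G2[OF fC, of g] by (simp only: Sg m_def[symmetric] Pi2eq[symmetric])
  have m2': "4^m * (n - m)^(n - m) \<le> 4^(2*k) * (n - 2*k)^(n - 2*k) \<and>
     (2*k < m \<longrightarrow> 4^m * (n - m)^(n - m) < 4^(2*k) * (n - 2*k)^(n - 2*k))"
    using M2[of "2*k" "m - 2*k" n] mge m2 by simp
  have s2k: "Suc (2*k-1) = 2*k" using k2 by simp
  have e2k: "(2::nat)^(2*k) = 2 * 2^(2*k-1)"
  proof -
    have "(2::nat)^(2*k) = 2^(Suc (2*k-1))" by (simp only: s2k)
    then show ?thesis by (simp only: power_Suc)
  qed
  have e4k: "(4::nat)^(2*k) = 4 * 4^(2*k-1)"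
  proof -
    have "(4::nat)^(2*k) = 4^(Suc (2*k-1))" by (simp only: s2k)
    then show ?thesis by (simp only: power_Suc)
  qed
  have e42: "(4::nat)^(2*k-1) * (n - 2*k)^2 = (2^(2*k-1) * (n - 2*k))^2"
  proof -
    have "(4::nat)^(2*k-1) = (2*2)^(2*k-1)" by simp
    also have "\<dots> = 2^(2*k-1) * 2^(2*k-1)" by (rule power_mult_distrib)
    also have "\<dots> = (2^(2*k-1))^2" by (simp only: power2_eq_square)
    finally show ?thesis by (simp only: power_mult_distrib)
  qed
  define B where "B = 2^(2*k-1) * (n - 2*k)"
  have PB: "B \<le> P" using g1 m1 e2k B_def by simp
  have ineq1: "4^(2*k-1) * (n - 2*k)^2 \<le> Pi1 V E" using PB Pi1eq e42 B_def by (simp add: power_mono)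
  have ineq2: "Pi2 V E \<le> 4^(2*k-1) * (n - 2*k)^(n - 2*k)" using g2 m2' e4k by simp
  define Good where "Good \<longleftrightarrow> m = 2*k \<and> (\<forall>u\<in>C. \<forall>v\<in>C. 3 \<le> deg V E u \<longrightarrow> 3 \<le> deg V E v \<longrightarrow> u = v)"
  have two_hubs: "\<And>u v. u \<in> C \<Longrightarrow> v \<in> C \<Longrightarrow> u \<noteq> v \<Longrightarrow> 3 \<le> deg V E u \<Longrightarrow> 3 \<le> deg V E v \<Longrightarrow>
      1 \<le> g u \<and> 1 \<le> g v" using degC by fastforce
  have good_iso: "Good \<Longrightarrow> \<exists>a\<in>{1..k}. graph_iso V E {..<n} (T_edge n k a)"
  proof -
    assume G: Good
    have cC: "card C = 2*(k-1)+2" using G Good_def m_def k2 by simp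
    obtain p where pb: "bij_betw p {..<2*(k-1)+2} C"
      and padj: "\<forall>i<2*(k-1)+2. \<forall>i'<2*(k-1)+2. coreE V E (p i) (p i') \<longleftrightarrow> (i = Suc i' \<or> i' = Suc i)"
      using path_lemma[OF tC ndC cC] by blast
    have kk: "2*(k-1)+2 = 2*k" using k2 by simp
    have pb': "bij_betw p {..<2*k} (core V E)" using pb kk C_def by simp
    have pC: "\<And>i. i < 2*k \<Longrightarrow> p i \<in> C" using pb' C_def bij_betwE by blast
    have padj': "\<forall>i<2*k. \<forall>i'<2*k. E (p i) (p i') \<longleftrightarrow> (i = Suc i' \<or> i' = Suc i)"
    proof (intro allI impI)
      fix i i' assume i: "i < 2*k" and i': "i' < 2*k"
      have "coreE V E (p i) (p i') \<longleftrightarrow> E (p i) (p i')" using pC[OF i] pC[OF i']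
        by (simp add: coreE_def C_def)
      then show "E (p i) (p i') \<longleftrightarrow> (i = Suc i' \<or> i' = Suc i)" using padj i i' kk by simp
    qed
    have hub: "\<forall>u\<in>core V E. \<forall>v\<in>core V E. 3 \<le> deg V E u \<longrightarrow> 3 \<le> deg V E v \<longrightarrow> u = v"
      using G Good_def C_def by simp
    have k1: "1 \<le> k" using k2 by simp
    obtain b where b: "b < 2*k" and iso: "graph_iso V E {..<card V} (T_edge (card V) k (Suc b))"
      using ext_iso[OF t k1 pb' padj' hub] by blast
    have iso': "graph_iso V E {..<n} (T_edge n k (Suc b))" using iso assms(3) by simp
    show ?thesis
    proof (cases "Suc b \<le> k")
      case True then show ?thesis using iso' by auto
    next
      case False
      have r: "graph_iso {..<n} (T_edge n k (Suc b)) {..<n} (T_edge n k (2*k+1 - Suc b))"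
        using reflect[of "Suc b" k n] b nge by simp
      have "graph_iso V E {..<n} (T_edge n k (2*k+1 - Suc b))" using iso_trans[OF iso' r] .
      moreover have "2*k+1 - Suc b \<in> {1..k}" using False b by auto
      ultimately show ?thesis by blast
    qed
  qed
  have iso_val: "(\<exists>a\<in>{1..k}. graph_iso V E {..<n} (T_edge n k a)) \<Longrightarrow>
      Pi1 V E = 4^(2*k-1) * (n - 2*k)^2 \<and> Pi2 V E = 4^(2*k-1) * (n - 2*k)^(n - 2*k)"
  proof -
    assume "\<exists>a\<in>{1..k}. graph_iso V E {..<n} (T_edge n k a)"
    then obtain a where a: "1 \<le> a" "a \<le> k" and iso: "graph_iso V E {..<n} (T_edge n k a)" by auto
    have "1 \<le> k" "a \<le> 2*k" using a k2 by auto
    then show ?thesis using iso_Pi[OF iso] T_Pi[of k a n] a nge by simp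
  qed
  have eq1_good: "Pi1 V E = 4^(2*k-1) * (n - 2*k)^2 \<Longrightarrow> Good"
  proof -
    assume eq: "Pi1 V E = 4^(2*k-1) * (n - 2*k)^2"
    then have "P^2 = B^2" using Pi1eq e42 B_def by simp
    then have PB': "P = B" by (simp add: power2_eq_iff_nonneg)
    then have tp: "2 * P = 2^(2*k) * (n - 2*k)" using e2k B_def by simp
    have "m = 2*k"
    proof (rule ccontr)
      assume "m \<noteq> 2*k"
      then have "2*k < m" using mge by simp
      then show False using m1 g1 tp by simp
    qed
    moreover have "\<forall>u\<in>C. \<forall>v\<in>C. 3 \<le> deg V E u \<longrightarrow> 3 \<le> deg V E v \<longrightarrow> u = v"
    proof (intro ballI impI, rule ccontr)
      fix u v assume u: "u \<in> C" and v: "v \<in> C" and d: "3 \<le> deg V E u" "3 \<le> deg V E v" and ne: "u \<noteq> v"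
      have "2^m * (n - m) < 2 * P"
        using G1s[OF fC u v ne, of g] two_hubs[OF u v ne d] by (simp only: Sg m_def[symmetric] P_def[symmetric])
      then show False using m1 tp Sg by simp
    qed
    ultimately show Good using Good_def by simp
  qed
  have eq2_good: "Pi2 V E = 4^(2*k-1) * (n - 2*k)^(n - 2*k) \<Longrightarrow> Good"
  proof -
    assume eq: "Pi2 V E = 4^(2*k-1) * (n - 2*k)^(n - 2*k)"
    then have tp: "4 * Pi2 V E = 4^(2*k) * (n - 2*k)^(n - 2*k)" using e4k by simp
    have "m = 2*k"
    proof (rule ccontr)
      assume "m \<noteq> 2*k"
      then have "2*k < m" using mge by simp
      then show False using m2' g2 tp by simp
    qed
    moreover have "\<forall>u\<in>C. \<forall>v\<in>C. 3 \<le> deg V E u \<longrightarrow> 3 \<le> deg V E v \<longrightarrow> u = v"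
    proof (intro ballI impI, rule ccontr)
      fix u v assume u: "u \<in> C" and v: "v \<in> C" and d: "3 \<le> deg V E u" "3 \<le> deg V E v" and ne: "u \<noteq> v"
      have "4 * Pi2 V E < 4^m * (n - m)^(n - m)"
        using G2s[OF fC u v ne, of g] two_hubs[OF u v ne d] by (simp only: Sg m_def[symmetric] Pi2eq[symmetric])
      then show False using m2' tp by simp
    qed
    ultimately show Good using Good_def by simp
  qed
  show ?thesis using ineq1 ineq2 good_iso iso_val eq1_good eq2_good by blast
qed


end
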